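(* Let $T=(V,E,\gamma,\mathrm{p})$ be a fault tree and let $X=\{v\in V\mid v\text{ has more than one parent}\}$. Then Algorithm $\mathtt{SFPA2}$ (described in the context) on input $T$ has time complexity $\mathcal O(|V|(|X|+1)4^{|X|})$.
   Context: A fault tree (FT) is a tuple $T=(V,E,\gamma,\mathrm{p})$ where $(V,E)$ is a rooted directed acyclic graph (edges point from a node to its children; the root is denoted $R_T$), $\gamma\colon V\to\{\mathtt{OR},\mathtt{AND},\mathtt{BE}\}$ satisfies $\gamma(v)=\mathtt{BE}$ iff $v$ is a leaf, and $\mathrm{p}\colon \mathrm{BE}(T)\to[0,1]$ with $\mathrm{BE}(T)=\{v\in V\mid \gamma(v)=\mathtt{BE}\}$. Let $\mathrm{ch}(v)$ be the set of children of $v$. Order and dominators: write $x\preceq y$ iff there is a directed path (possibly of length $0$) from $y$ to $x$, and $x\prec y$ iff $x\preceq y$, $x\neq y$. A node $w$ dominates $v$ if $v\prec w$ and every directed path from $R_T$ to $v$ contains $w$. For every $v\neq R_T$ there is a unique dominator $\mathrm{id}(v)$ of $v$ (immediate dominator) with $\mathrm{id}(v)\preceq w'$ for every dominator $w'$ of $v$; all immediate dominators can be computed in time $\mathcal O(|E|)$. Squarefree polynomial algebra: for a finite set $X$, $\mathcal A(X)$ is the real algebra of formal sums $\alpha=\sum_{Y\subseteq X}\alpha_Y\prod_{x\in Y}\mathsf F_x$ with polynomial addition and multiplication subject to $\mathsf F_x^2=\mathsf F_x$, i.e. $(\alpha+\beta)_Y=\alpha_Y+\beta_Y$, $(\alpha\beta)_Y=\sum_{Y'\cup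 Y''=Y}\alpha_{Y'}\beta_{Y''}$. Elements of $\mathcal A(X)$ are regarded as elements of $\mathcal A(X')$ for $X\subseteq X'$; $\mathcal A(\varnothing)=\mathbb R$. For $x\in X\setminus Y$, $\alpha\in\mathcal A(X)$, $\beta\in\mathcal A(Y)$, the substitution $\alpha[\mathsf F_x\mapsto\beta]\in\mathcal A((X\setminus\{x\})\cup Y)$ is $\beta\cdot\sum_{Z\ni x}\alpha_Z\prod_{x'\in Z\setminus\{x\}}\mathsf F_{x'}+\sum_{Z\not\ni x}\alpha_Z\prod_{x'\in Z}\mathsf F_{x'}$. Algorithm $\mathtt{SFPA2}(T)$: set $\mathsf{ToDo}\leftarrow V$. While $\mathsf{ToDo}\neq\varnothing$: pick $v\in\mathsf{ToDo}$ minimal w.r.t. $\preceq$ and remove it. If $\gamma(v)=\mathtt{BE}$, set $g_v\leftarrow\mathrm{p}(v)$. Otherwise let $S_v=\{w\in\mathrm{ch}(v)\mid\mathrm{id}(w)=v\}$; if $\gamma(v)=\mathtt{OR}$ set $g_v\leftarrow 1-\prod_{w\in S_v}(1-g_w)\cdot\prod_{w\in\mathrm{ch}(v)\setminus S_v}(1-\mathsf F_w)$; if $\gamma(v)=\mathtt{AND}$ set $g_v\leftarrow\prod_{w\in S_v}g_w\cdot\prod_{w\in\mathrm{ch}(v)\setminus S_v}\mathsf F_w$. Then set $\mathsf{ToDo}_v\leftarrow\{w\in V\setminus\mathrm{ch}(v)\mid\mathrm{id}(w)=v\}$ and, while $\mathsf{ToDo}_v\neq\varnothing$, pick $w\in\mathsf{ToDo}_v$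 maximal w.r.t. $\preceq$, remove it, and set $g_v\leftarrow g_v[\mathsf F_w\mapsto g_w]$. Return $g_{R_T}$. (This algorithm outputs the unreliability of $T$.) Time complexity counts real arithmetic operations as unit cost. *)

theory Defs
  imports Complex_Main
begin

datatype gate = OR | AND | BE

record 'a fault_tree =
  nodes :: "'a set"
  edges :: "('a \<times> 'a) set"
  root  :: "'a"
  gtype :: "'a \<Rightarrow> gate"
  prob  :: "'a \<Rightarrow> real"

definition ch :: "'a fault_tree \<Rightarrow> 'a \<Rightarrow> 'a set" where
  "ch T v = {w. (v, w) \<in> edges T}"

definition parents :: "'a fault_tree \<Rightarrow> 'a \<Rightarrow> 'a set" where
  "parents T v = {u. (u, v) \<in> edges T}"

definition fault_tree :: "'a fault_tree \<Rightarrow> bool" where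
  "fault_tree T \<longleftrightarrow>
     finite (nodes T) \<and> edges T \<subseteq> nodes T \<times> nodes T \<and> acyclic (edges T) \<and>
     root T \<in> nodes T \<and> (\<forall>v \<in> nodes T. (root T, v) \<in> (edges T)\<^sup>*) \<and>
     (\<forall>v \<in> nodes T. gtype T v = BE \<longleftrightarrow> ch T v = {}) \<and>
     (\<forall>v \<in> nodes T. gtype T v = BE \<longrightarrow> 0 \<le> prob T v \<and> prob T v \<le> 1)"

definition preceq :: "'a fault_tree \<Rightarrow> 'a \<Rightarrow> 'a \<Rightarrow> bool" where
  "preceq T x y \<longleftrightarrow> (y, x) \<in> (edges T)\<^sup>*"

definition prec :: "'a fault_tree \<Rightarrow> 'a \<Rightarrow> 'a \<Rightarrow> bool" where
  "prec T x y \<longleftrightarrow> preceq T x y \<and> x \<noteq> y"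

definition is_path :: "'a fault_tree \<Rightarrow> 'a list \<Rightarrow> bool" where
  "is_path T xs \<longleftrightarrow> xs \<noteq> [] \<and> (\<forall>i. Suc i < length xs \<longrightarrow> (xs ! i, xs ! Suc i) \<in> edges T)"

definition dominates :: "'a fault_tree \<Rightarrow> 'a \<Rightarrow> 'a \<Rightarrow> bool" where
  "dominates T w v \<longleftrightarrow> prec T v w \<and>
     (\<forall>xs. is_path T xs \<and> hd xs = root T \<and> last xs = v \<longrightarrow> w \<in> set xs)"

text \<open>Immediate dominator (meaningful for v \<noteq> root).\<close>
definition idom :: "'a fault_tree \<Rightarrow> 'a \<Rightarrow> 'a" where
  "idom T v = (THE w. dominates T w v \<and> (\<forall>w'. dominates T w' v \<longrightarrow> preceq T w w'))"

definition multi_parent :: "'a fault_tree \<Rightarrow> 'a set" where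
  "multi_parent T = {v \<in> nodes T. card (parents T v) > 1}"

text \<open>An element of A(X) is represented by its declared variable set X together with its
  coefficient function (only coefficients of subsets of X are used); such an element is
  stored as 2^|X| real coefficients.\<close>
type_synonym 'a sfp = "'a set \<times> ('a set \<Rightarrow> real)"

definition sfp_const :: "real \<Rightarrow> 'a sfp" where
  "sfp_const c = ({}, \<lambda>Y. if Y = {} then c else 0)"

definition sfp_var :: "'a \<Rightarrow> 'a sfp" where
  "sfp_var x = ({x}, \<lambda>Y. if Y = {x} then 1 else 0)"

definition sfp_add :: "'a sfp \<Rightarrow> 'a sfp \<Rightarrow> 'a sfp" where
  "sfp_add \<alpha> \<beta> = (fst \<alpha> \<union> fst \<beta>, \<lambda>Y. snd \<alpha> Y + snd \<beta> Y)"

definition sfp_sub :: "'a sfp \<Rightarrow> 'a sfp \<Rightarrow> 'a sfp" where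
  "sfp_sub \<alpha> \<beta> = (fst \<alpha> \<union> fst \<beta>, \<lambda>Y. snd \<alpha> Y - snd \<beta> Y)"

definition sfp_mult :: "'a sfp \<Rightarrow> 'a sfp \<Rightarrow> 'a sfp" where
  "sfp_mult \<alpha> \<beta> = (fst \<alpha> \<union> fst \<beta>,
     \<lambda>Y. \<Sum>Y'\<in>Pow (fst \<alpha>). \<Sum>Y''\<in>Pow (fst \<beta>).
            if Y' \<union> Y'' = Y then snd \<alpha> Y' * snd \<beta> Y'' else 0)"

text \<open>alpha[F_x := beta] = beta * alpha1 + alpha0 where alpha1 collects the monomials
  containing x (with x removed) and alpha0 the others.\<close>
definition sfp_part1 :: "'a \<Rightarrow> 'a sfp \<Rightarrow> 'a sfp" where
  "sfp_part1 x \<alpha> = (fst \<alpha> - {x}, \<lambda>Y. if x \<notin> Y then snd \<alpha> (insert x Y) else 0)"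

definition sfp_part0 :: "'a \<Rightarrow> 'a sfp \<Rightarrow> 'a sfp" where
  "sfp_part0 x \<alpha> = (fst \<alpha> - {x}, \<lambda>Y. if x \<notin> Y then snd \<alpha> Y else 0)"

definition sfp_subst :: "'a \<Rightarrow> 'a sfp \<Rightarrow> 'a sfp \<Rightarrow> 'a sfp" where
  "sfp_subst x \<alpha> \<beta> = sfp_add (sfp_mult \<beta> (sfp_part1 x \<alpha>)) (sfp_part0 x \<alpha>)"

text \<open>Numbers of real arithmetic operations (naive coefficientwise algorithms).\<close>
definition add_cost :: "'a sfp \<Rightarrow> 'a sfp \<Rightarrow> nat" where
  "add_cost \<alpha> \<beta> = 2 ^ card (fst \<alpha> \<union> fst \<beta>)"

definition mult_cost :: "'a sfp \<Rightarrow> 'a sfp \<Rightarrow> nat" where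
  "mult_cost \<alpha> \<beta> = 2 * 2 ^ card (fst \<alpha>) * 2 ^ card (fst \<beta>)"

definition subst_cost :: "'a \<Rightarrow> 'a sfp \<Rightarrow> 'a sfp \<Rightarrow> nat" where
  "subst_cost x \<alpha> \<beta> = mult_cost \<beta> (sfp_part1 x \<alpha>)
     + add_cost (sfp_mult \<beta> (sfp_part1 x \<alpha>)) (sfp_part0 x \<alpha>)"

definition S_set :: "'a fault_tree \<Rightarrow> 'a \<Rightarrow> 'a set" where
  "S_set T v = {w \<in> ch T v. w \<noteq> root T \<and> idom T w = v}"

definition ToDo_set :: "'a fault_tree \<Rightarrow> 'a \<Rightarrow> 'a set" where
  "ToDo_set T v = {w \<in> nodes T - ch T v. w \<noteq> root T \<and> idom T w = v}"

definition init_node :: "'a fault_tree \<Rightarrow> ('a \<Rightarrow> 'a sfp) \<Rightarrow> 'a list \<Rightarrow> 'a \<Rightarrow> 'a sfp \<times> nat" where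
  "init_node T g cs v =
     (case gtype T v of
        BE \<Rightarrow> (sfp_const (prob T v), 0)
      | AND \<Rightarrow> foldl (\<lambda>(acc, c) w.
                 let f = (if w \<in> S_set T v then g w else sfp_var w)
                 in (sfp_mult acc f, c + mult_cost acc f)) (sfp_const 1, 0) cs
      | OR \<Rightarrow> (let (acc, c) = foldl (\<lambda>(acc, c) w.
                 let f0 = (if w \<in> S_set T v then g w else sfp_var w);
                     f = sfp_sub (sfp_const 1) f0
                 in (sfp_mult acc f, c + add_cost (sfp_const 1) f0 + mult_cost acc f))
                 (sfp_const 1, 0) cs
               in (sfp_sub (sfp_const 1) acc, c + add_cost (sfp_const 1) acc)))"

definition process_node :: "'a fault_tree \<Rightarrow> ('a \<Rightarrow> 'a sfp) \<Rightarrow> 'a list \<Rightarrow> 'a list \<Rightarrow> 'a \<Rightarrow> 'a sfp \<times> nat" where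
  "process_node T g cs ws v =
     (if gtype T v = BE then init_node T g cs v
      else foldl (\<lambda>(acc, c) w. (sfp_subst w acc (g w), c + subst_cost w acc (g w)))
             (init_node T g cs v) ws)"

text \<open>A run of SFPA2: vs is the order in which the outer loop picks nodes, cs v the order
  in which the products at v are evaluated, ws v the order of the inner loop at v.\<close>
definition sfpa2_run :: "'a fault_tree \<Rightarrow> 'a list \<Rightarrow> ('a \<Rightarrow> 'a list) \<Rightarrow> ('a \<Rightarrow> 'a list)
    \<Rightarrow> ('a \<Rightarrow> 'a sfp) \<times> nat" where
  "sfpa2_run T vs cs ws =
     foldl (\<lambda>(g, c) v. let (r, c') = process_node T g (cs v) (ws v) v in (g(v := r), c + c'))
       (\<lambda>_. sfp_const 0, 0) vs"

definition sfpa2_cost :: "'a fault_tree \<Rightarrow> 'a list \<Rightarrow> ('a \<Rightarrow> 'a list) \<Rightarrow> ('a \<Rightarrow> 'a list) \<Rightarrow> nat" where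
  "sfpa2_cost T vs cs ws = snd (sfpa2_run T vs cs ws)"

text \<open>Admissible choices: the outer loop always picks a \<preceq>-minimal remaining node,
  the inner loop always a \<preceq>-maximal remaining node; products in any order.\<close>
definition valid_outer :: "'a fault_tree \<Rightarrow> 'a list \<Rightarrow> bool" where
  "valid_outer T vs \<longleftrightarrow> distinct vs \<and> set vs = nodes T \<and>
     (\<forall>i j. i < j \<and> j < length vs \<longrightarrow> \<not> prec T (vs ! j) (vs ! i))"

definition valid_children :: "'a fault_tree \<Rightarrow> ('a \<Rightarrow> 'a list) \<Rightarrow> bool" where
  "valid_children T cs \<longleftrightarrow> (\<forall>v \<in> nodes T. distinct (cs v) \<and> set (cs v) = ch T v)"

definition valid_inner :: "'a fault_tree \<Rightarrow> ('a \<Rightarrow> 'a list) \<Rightarrow> bool" where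
  "valid_inner T ws \<longleftrightarrow> (\<forall>v \<in> nodes T. distinct (ws v) \<and> set (ws v) = ToDo_set T v \<and>
     (\<forall>i j. i < j \<and> j < length (ws v) \<longrightarrow> \<not> prec T (ws v ! i) (ws v ! j)))"

end

theory Submission
  imports Defs
begin

lemma acyc_antisym:
  assumes "acyclic r" "(a,b) \<in> r\<^sup>*" "(b,a) \<in> r\<^sup>*" shows "a = b"
proof (rule ccontr)
  assume "a \<noteq> b"
  then have "(a,b) \<in> r\<^sup>+" using assms(2) by (meson rtrancl_eq_or_trancl)
  then have "(a,a) \<in> r\<^sup>+" using assms(3) by (meson trancl_rtrancl_trancl)
  then show False using assms(1) by (simp add: acyclic_def)
qed

lemma is_path_Cons:
  assumes "is_path T xs" "(a, hd xs) \<in> edges T" shows "is_path T (a # xs)"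
  unfolding is_path_def
proof (intro conjI allI impI)
  fix i assume i: "Suc i < length (a # xs)"
  have ne: "xs \<noteq> []" using assms(1) by (simp add: is_path_def)
  show "((a # xs) ! i, (a # xs) ! Suc i) \<in> edges T"
  proof (cases i)
    case 0 then show ?thesis using assms ne by (simp add: hd_conv_nth)
  next
    case (Suc j) then show ?thesis using assms(1) i by (simp add: is_path_def)
  qed
qed simp

lemma path_exists:
  assumes "(a, v) \<in> (edges T)\<^sup>*" "(v, w) \<in> edges T"
  shows "\<exists>xs. is_path T xs \<and> hd xs = a \<and> last xs = w \<and>
           (\<forall>x\<in>set xs. x = w \<or> (x, v) \<in> (edges T)\<^sup>*)"
  using assms(1)
proof (induction rule: converse_rtrancl_induct)
  case base
  have "is_path T [v, w]" using assms(2) unfolding is_path_def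
    by (auto simp: less_Suc_eq nth_Cons split: nat.splits)
  then show ?case by (intro exI[of _ "[v,w]"]) auto
next
  case (step y z)
  then obtain xs where xs: "is_path T xs" "hd xs = z" "last xs = w"
     "\<forall>x\<in>set xs. x = w \<or> (x, v) \<in> (edges T)\<^sup>*" by blast
  have ne: "xs \<noteq> []" using xs(1) by (simp add: is_path_def)
  have "is_path T (y # xs)" using is_path_Cons xs step by auto
  moreover have "(y, v) \<in> (edges T)\<^sup>*" using step by (meson converse_rtrancl_into_rtrancl)
  ultimately show ?case using xs ne step
    by (intro exI[of _ "y # xs"]) auto
qed

lemma single_parent_idom:
  assumes ft: "fault_tree T" and v: "v \<in> nodes T" and w: "w \<in> ch T v"
    and nX: "w \<notin> multi_parent T"
  shows "w \<noteq> root T \<and> idom T w = v"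
proof -
  have E: "edges T \<subseteq> nodes T \<times> nodes T" and fin: "finite (nodes T)"
    and ac: "acyclic (edges T)" and rootr: "\<forall>v \<in> nodes T. (root T, v) \<in> (edges T)\<^sup>*"
    using ft by (auto simp: fault_tree_def)
  have vw: "(v, w) \<in> edges T" using w by (simp add: ch_def)
  have wN: "w \<in> nodes T" using vw E by auto
  have fp: "finite (parents T w)" using E fin
    by (intro finite_subset[OF _ fin]) (auto simp: parents_def)
  have vp: "v \<in> parents T w" using vw by (simp add: parents_def)
  have "card (parents T w) \<le> 1" using nX wN by (simp add: multi_parent_def)
  then have par: "parents T w = {v}" using fp vp
    using card_le_Suc0_iff_eq[OF fp] by auto
  have rv: "(root T, v) \<in> (edges T)\<^sup>*" using rootr v by auto
  have wr: "w \<noteq> root T"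
  proof
    assume "w = root T"
    then have "(w, v) \<in> (edges T)\<^sup>*" using rv by simp
    then have "w = v" using acyc_antisym[OF ac] vw by blast
    then show False using vw ac by (auto simp: acyclic_def)
  qed
  have wv: "w \<noteq> v" using vw ac by (auto simp: acyclic_def)
  have dom: "dominates T v w"
    unfolding dominates_def
  proof (intro conjI allI impI)
    show "prec T w v" using vw wv by (auto simp: prec_def preceq_def)
    fix xs assume h: "is_path T xs \<and> hd xs = root T \<and> last xs = w"
    then have ne: "xs \<noteq> []" by (simp add: is_path_def)
    have l2: "length xs \<ge> 2"
    proof (rule ccontr)
      assume "\<not> length xs \<ge> 2"
      moreover have "length xs \<noteq> 0" using ne by simp
      ultimately have "length xs = 1" by linarith
      then have "hd xs = last xs" by (cases xs) auto
      then show False using h wr by simp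
    qed
    define n where "n = length xs"
    have "(xs ! (n-2), xs ! Suc (n-2)) \<in> edges T" using h l2 unfolding n_def is_path_def by auto
    moreover have "xs ! Suc (n-2) = w" using h l2 ne unfolding n_def
      by (simp add: last_conv_nth Suc_diff_Suc numeral_2_eq_2)
    ultimately have "xs ! (n-2) \<in> parents T w" by (simp add: parents_def)
    then have "xs ! (n-2) = v" using par by simp
    moreover have "n - 2 < length xs" using l2 unfolding n_def by simp
    ultimately show "v \<in> set xs" by (metis nth_mem)
  qed
  have idm: "\<forall>w'. dominates T w' w \<longrightarrow> preceq T v w'"
  proof (intro allI impI)
    fix w' assume d: "dominates T w' w"
    obtain xs where xs: "is_path T xs" "hd xs = root T" "last xs = w"
      "\<forall>x\<in>set xs. x = w \<or> (x, v) \<in> (edges T)\<^sup>*" using path_exists[OF rv vw] by blast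
    have "w' \<in> set xs" using d xs by (auto simp: dominates_def)
    moreover have "w' \<noteq> w" using d by (auto simp: dominates_def prec_def)
    ultimately show "preceq T v w'" using xs(4) by (auto simp: preceq_def)
  qed
  have "idom T w = v" unfolding idom_def
  proof (rule the_equality)
    show "dominates T v w \<and> (\<forall>w'. dominates T w' w \<longrightarrow> preceq T v w')" using dom idm by blast
  next
    fix x assume hx: "dominates T x w \<and> (\<forall>w'. dominates T w' w \<longrightarrow> preceq T x w')"
    then have "(v, x) \<in> (edges T)\<^sup>*" using dom by (auto simp: preceq_def)
    moreover have "(x, v) \<in> (edges T)\<^sup>*" using hx idm by (auto simp: preceq_def)
    ultimately show "x = v" using acyc_antisym[OF ac] by blast
  qed
  then show ?thesis using wr by simp
qed


lemma pow_card_le: "finite X \<Longrightarrow> A \<subseteq> X \<Longrightarrow> (2::nat) ^ card A \<le> 2 ^ card X"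
  by (intro power_increasing card_mono) auto

lemma four_pow: "(4::nat) ^ n = 2 ^ n * 2 ^ n"
  by (metis power_mult_distrib num_double numeral_times_numeral)

lemma mult_cost_le:
  assumes "finite X" "fst a \<subseteq> X" "fst b \<subseteq> X"
  shows "mult_cost a b \<le> 2 * 4 ^ card X"
proof -
  have "2 ^ card (fst a) * 2 ^ card (fst b) \<le> (2::nat) ^ card X * 2 ^ card X"
    using pow_card_le[OF assms(1,2)] pow_card_le[OF assms(1,3)] by (rule mult_le_mono)
  then show ?thesis by (simp add: mult_cost_def four_pow)
qed

lemma add_cost_le:
  assumes "finite X" "fst a \<subseteq> X" "fst b \<subseteq> X"
  shows "add_cost a b \<le> 4 ^ card X"
proof -
  have "(2::nat) ^ card (fst a \<union> fst b) \<le> 2 ^ card X" using assms by (intro pow_card_le) auto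
  also have "\<dots> \<le> 4 ^ card X" by (simp add: four_pow)
  finally show ?thesis by (simp add: add_cost_def)
qed

lemma fst_ops:
  "fst (sfp_mult a b) = fst a \<union> fst b" "fst (sfp_add a b) = fst a \<union> fst b"
  "fst (sfp_sub a b) = fst a \<union> fst b" "fst (sfp_part1 x a) = fst a - {x}"
  "fst (sfp_part0 x a) = fst a - {x}" "fst (sfp_const c) = {}" "fst (sfp_var x) = {x}"
  by (auto simp: sfp_mult_def sfp_add_def sfp_sub_def sfp_part1_def sfp_part0_def
     sfp_const_def sfp_var_def)

lemma subst_cost_le:
  assumes "finite X" "fst a \<subseteq> X" "fst b \<subseteq> X"
  shows "subst_cost x a b \<le> 3 * 4 ^ card X" "fst (sfp_subst x a b) \<subseteq> X"
proof -
  have "mult_cost b (sfp_part1 x a) \<le> 2 * 4 ^ card X"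
    using assms by (intro mult_cost_le) (auto simp: fst_ops)
  moreover have "add_cost (sfp_mult b (sfp_part1 x a)) (sfp_part0 x a) \<le> 4 ^ card X"
    using assms by (intro add_cost_le) (auto simp: fst_ops)
  ultimately show "subst_cost x a b \<le> 3 * 4 ^ card X" by (simp add: subst_cost_def)
  show "fst (sfp_subst x a b) \<subseteq> X" using assms by (auto simp: sfp_subst_def fst_ops)
qed

lemma fold_and:
  assumes "finite X" "fst (fst p) \<subseteq> X" "\<forall>w\<in>set cs. fst (F w) \<subseteq> X"
  shows "fst (fst (foldl (\<lambda>(acc, c) w. (sfp_mult acc (F w), c + mult_cost acc (F w))) p cs)) \<subseteq> X
    \<and> snd (foldl (\<lambda>(acc, c) w. (sfp_mult acc (F w), c + mult_cost acc (F w))) p cs)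
       \<le> snd p + length cs * (3 * 4 ^ card X)"
  using assms(2,3)
proof (induction cs arbitrary: p)
  case Nil then show ?case by simp
next
  case (Cons a cs)
  obtain acc c where p: "p = (acc, c)" by fastforce
  have m: "mult_cost acc (F a) \<le> 3 * 4 ^ card X"
    using mult_cost_le[OF assms(1), of acc "F a"] Cons.prems p by auto
  have "fst (fst (sfp_mult acc (F a), c + mult_cost acc (F a))) \<subseteq> X"
    using Cons.prems p by (auto simp: fst_ops)
  from Cons.IH[OF this] Cons.prems m show ?case by (auto simp: p)
qed

lemma fold_or:
  assumes "finite X" "fst (fst p) \<subseteq> X" "\<forall>w\<in>set cs. fst (F w) \<subseteq> X"
  shows "fst (fst (foldl (\<lambda>(acc, c) w. (sfp_mult acc (sfp_sub (sfp_const 1) (F w)),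
        c + add_cost (sfp_const 1) (F w) + mult_cost acc (sfp_sub (sfp_const 1) (F w)))) p cs)) \<subseteq> X
    \<and> snd (foldl (\<lambda>(acc, c) w. (sfp_mult acc (sfp_sub (sfp_const 1) (F w)),
        c + add_cost (sfp_const 1) (F w) + mult_cost acc (sfp_sub (sfp_const 1) (F w)))) p cs)
       \<le> snd p + length cs * (3 * 4 ^ card X)"
  using assms(2,3)
proof (induction cs arbitrary: p)
  case Nil then show ?case by simp
next
  case (Cons a cs)
  obtain acc c where p: "p = (acc, c)" by fastforce
  have m: "mult_cost acc (sfp_sub (sfp_const 1) (F a)) \<le> 2 * 4 ^ card X"
    using Cons.prems p by (intro mult_cost_le[OF assms(1)]) (auto simp: fst_ops)
  have ad: "add_cost (sfp_const 1) (F a) \<le> 4 ^ card X"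
    using Cons.prems p by (intro add_cost_le[OF assms(1)]) (auto simp: fst_ops)
  have "fst (sfp_mult acc (sfp_sub (sfp_const 1) (F a))) \<subseteq> X"
    using Cons.prems p by (auto simp: fst_ops)
  from Cons.IH[of "(sfp_mult acc (sfp_sub (sfp_const 1) (F a)), c + add_cost (sfp_const 1) (F a)
      + mult_cost acc (sfp_sub (sfp_const 1) (F a)))"] this Cons.prems m ad show ?case by (auto simp: p)
qed

lemma fold_subst:
  assumes "finite X" "fst (fst p) \<subseteq> X" "\<forall>u. fst (g u) \<subseteq> X"
  shows "fst (fst (foldl (\<lambda>(acc, c) w. (sfp_subst w acc (g w), c + subst_cost w acc (g w))) p ws)) \<subseteq> X
    \<and> snd (foldl (\<lambda>(acc, c) w. (sfp_subst w acc (g w), c + subst_cost w acc (g w))) p ws)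
       \<le> snd p + length ws * (3 * 4 ^ card X)"
  using assms(2)
proof (induction ws arbitrary: p)
  case Nil then show ?case by simp
next
  case (Cons a ws)
  obtain acc c where p: "p = (acc, c)" by fastforce
  have s: "subst_cost a acc (g a) \<le> 3 * 4 ^ card X" "fst (sfp_subst a acc (g a)) \<subseteq> X"
    using subst_cost_le[OF assms(1), of acc "g a" a] Cons.prems p assms(3) by auto
  from Cons.IH[of "(sfp_subst a acc (g a), c + subst_cost a acc (g a))"] s show ?case by (auto simp: p)
qed


lemma finite_mp: "fault_tree T \<Longrightarrow> finite (multi_parent T)"
  by (rule finite_subset[of _ "nodes T"]) (auto simp: multi_parent_def fault_tree_def)

lemma process_bound:
  assumes ft: "fault_tree T" and v: "v \<in> nodes T" and cs: "set cs \<subseteq> ch T v"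
    and g: "\<forall>u. fst (g u) \<subseteq> multi_parent T"
  shows "fst (fst (process_node T g cs ws v)) \<subseteq> multi_parent T \<and>
    snd (process_node T g cs ws v) \<le> (length cs + length ws + 1) * (3 * 4 ^ card (multi_parent T))"
proof -
  let ?X = "multi_parent T"
  let ?B = "3 * 4 ^ card ?X :: nat"
  have fX: "finite ?X" using finite_mp[OF ft] .
  define F where "F = (\<lambda>w. if w \<in> S_set T v then g w else sfp_var w)"
  have F: "\<forall>w\<in>set cs. fst (F w) \<subseteq> ?X"
  proof
    fix w assume w: "w \<in> set cs"
    show "fst (F w) \<subseteq> ?X"
    proof (cases "w \<in> S_set T v")
      case True then show ?thesis using g by (simp add: F_def)
    next
      case False
      then have "w \<in> ?X" using single_parent_idom[OF ft v] cs w by (auto simp: S_set_def)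
      then show ?thesis using False by (simp add: F_def fst_ops)
    qed
  qed
  have init: "fst (fst (init_node T g cs v)) \<subseteq> ?X \<and> snd (init_node T g cs v) \<le> (length cs + 1) * ?B"
  proof (cases "gtype T v")
    case OR
    obtain acc c where eq: "foldl (\<lambda>(acc, c) w. (sfp_mult acc (sfp_sub (sfp_const 1) (F w)),
        c + add_cost (sfp_const 1) (F w) + mult_cost acc (sfp_sub (sfp_const 1) (F w)))) (sfp_const 1, 0) cs
        = (acc, c)" by fastforce
    have h: "fst acc \<subseteq> ?X \<and> c \<le> length cs * ?B"
      using fold_or[OF fX _ F, of "(sfp_const 1, 0)"] eq by (simp add: fst_ops)
    have ad: "add_cost (sfp_const 1) acc \<le> ?B"
      using add_cost_le[OF fX, of "sfp_const 1" acc] h by (simp add: fst_ops)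
    have "init_node T g cs v = (sfp_sub (sfp_const 1) acc, c + add_cost (sfp_const 1) acc)"
      using eq OR unfolding F_def by (simp add: init_node_def Let_def)
    then show ?thesis using h ad by (simp add: fst_ops)
  next
    case AND
    have "init_node T g cs v = foldl (\<lambda>(acc, c) w. (sfp_mult acc (F w), c + mult_cost acc (F w)))
       (sfp_const 1, 0) cs" using AND unfolding F_def by (simp add: init_node_def Let_def)
    then show ?thesis using fold_and[OF fX _ F, of "(sfp_const 1, 0)"] by (simp add: fst_ops)
  next
    case BE then show ?thesis by (simp add: init_node_def fst_ops)
  qed
  show ?thesis
  proof (cases "gtype T v = BE")
    case True
    have c: "(length cs + 1) * ?B \<le> (length cs + length ws + 1) * ?B" by (intro mult_le_mono1) simp
    have e: "process_node T g cs ws v = init_node T g cs v" using True by (simp add: process_node_def)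
    show ?thesis unfolding e using init le_trans[OF _ c] by blast
  next
    case False
    then have "process_node T g cs ws v = foldl (\<lambda>(acc, c) w. (sfp_subst w acc (g w),
       c + subst_cost w acc (g w))) (init_node T g cs v) ws" by (simp add: process_node_def)
    moreover have "fst (fst (foldl (\<lambda>(acc, c) w. (sfp_subst w acc (g w),
       c + subst_cost w acc (g w))) (init_node T g cs v) ws)) \<subseteq> ?X \<and>
       snd (foldl (\<lambda>(acc, c) w. (sfp_subst w acc (g w),
       c + subst_cost w acc (g w))) (init_node T g cs v) ws) \<le> snd (init_node T g cs v) + length ws * ?B"
      using fold_subst[OF fX _ g] init by blast
    ultimately show ?thesis using init by (simp add: algebra_simps)
  qed
qed


lemma run_bound:
  assumes ft: "fault_tree T" and vc: "valid_children T cs"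
  shows "set vs \<subseteq> nodes T \<Longrightarrow> \<forall>u. fst (g u) \<subseteq> multi_parent T \<Longrightarrow>
    (\<forall>u. fst (fst (foldl (\<lambda>(g, c) v. let (r, c') = process_node T g (cs v) (ws v) v in (g(v := r), c + c'))
        (g, c) vs) u) \<subseteq> multi_parent T) \<and>
    snd (foldl (\<lambda>(g, c) v. let (r, c') = process_node T g (cs v) (ws v) v in (g(v := r), c + c'))
        (g, c) vs) \<le> c + (\<Sum>v\<leftarrow>vs. (length (cs v) + length (ws v) + 1) * (3 * 4 ^ card (multi_parent T)))"
proof (induction vs arbitrary: g c)
  case Nil then show ?case by simp
next
  case (Cons a vs)
  obtain r c' where eq: "process_node T g (cs a) (ws a) a = (r, c')" by fastforce
  have aN: "a \<in> nodes T" using Cons.prems by simp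
  have csa: "set (cs a) \<subseteq> ch T a" using vc aN by (simp add: valid_children_def)
  have pb: "fst r \<subseteq> multi_parent T \<and> c' \<le> (length (cs a) + length (ws a) + 1) * (3 * 4 ^ card (multi_parent T))"
    using process_bound[OF ft aN csa Cons.prems(2), of "ws a"] eq by simp
  have g': "\<forall>u. fst ((g(a := r)) u) \<subseteq> multi_parent T" using pb Cons.prems(2) by auto
  note IH = Cons.IH[OF _ g', of "c + c'"]
  show ?case using IH Cons.prems(1) pb by (simp add: eq)
qed

lemma sum_todo:
  assumes ft: "fault_tree T"
  shows "(\<Sum>v\<in>nodes T. card (ToDo_set T v)) \<le> card (nodes T)"
proof -
  have fin: "finite (nodes T)" using ft by (simp add: fault_tree_def)
  have sub: "\<And>v. ToDo_set T v \<subseteq> nodes T" by (auto simp: ToDo_set_def)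
  have "(\<Sum>v\<in>nodes T. card (ToDo_set T v)) = card (\<Union>v\<in>nodes T. ToDo_set T v)"
    using fin sub by (intro card_UN_disjoint[symmetric]) (auto simp: ToDo_set_def intro: finite_subset)
  also have "\<dots> \<le> card (nodes T)" using fin sub by (intro card_mono) auto
  finally show ?thesis .
qed

lemma sum_ch:
  assumes ft: "fault_tree T"
  shows "(\<Sum>v\<in>nodes T. card (ch T v)) \<le> card (nodes T) * (card (multi_parent T) + 1)"
proof -
  let ?X = "multi_parent T"
  have fin: "finite (nodes T)" and E: "edges T \<subseteq> nodes T \<times> nodes T" using ft by (auto simp: fault_tree_def)
  have chs: "\<And>v. ch T v \<subseteq> nodes T" using E by (auto simp: ch_def)
  have fX: "finite ?X" using finite_mp[OF ft] .
  have each: "\<And>v. card (ch T v) \<le> card (ch T v - ?X) + card ?X"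
  proof -
    fix v
    have "ch T v = (ch T v - ?X) \<union> (ch T v \<inter> ?X)" by auto
    then have "card (ch T v) \<le> card (ch T v - ?X) + card (ch T v \<inter> ?X)" by (metis card_Un_le)
    moreover have "card (ch T v \<inter> ?X) \<le> card ?X" using fX by (intro card_mono) auto
    ultimately show "card (ch T v) \<le> card (ch T v - ?X) + card ?X" by linarith
  qed
  have disj: "\<forall>i\<in>nodes T. \<forall>j\<in>nodes T. i \<noteq> j \<longrightarrow> (ch T i - ?X) \<inter> (ch T j - ?X) = {}"
  proof (intro ballI impI equalityI subsetI)
    fix i j w assume ij: "i \<noteq> j" and w: "w \<in> (ch T i - ?X) \<inter> (ch T j - ?X)"
    have wN: "w \<in> nodes T" using w chs by auto
    have "{i, j} \<subseteq> parents T w" using w by (auto simp: ch_def parents_def)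
    moreover have "finite (parents T w)" using fin E by (intro finite_subset[OF _ fin]) (auto simp: parents_def)
    ultimately have "card {i, j} \<le> card (parents T w)" by (rule card_mono[rotated])
    then have "card (parents T w) > 1" using ij by simp
    then have "w \<in> ?X" using wN by (simp add: multi_parent_def)
    then show "w \<in> {}" using w by simp
  qed simp
  have "(\<Sum>v\<in>nodes T. card (ch T v - ?X)) = card (\<Union>v\<in>nodes T. ch T v - ?X)"
    using fin chs disj by (intro card_UN_disjoint[symmetric]) (auto intro: finite_subset)
  also have "\<dots> \<le> card (nodes T)" using fin chs by (intro card_mono) auto
  finally have a: "(\<Sum>v\<in>nodes T. card (ch T v - ?X)) \<le> card (nodes T)" .
  have "(\<Sum>v\<in>nodes T. card (ch T v)) \<le> (\<Sum>v\<in>nodes T. card (ch T v - ?X) + card ?X)"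
    by (intro sum_mono each)
  also have "\<dots> = (\<Sum>v\<in>nodes T. card (ch T v - ?X)) + card (nodes T) * card ?X"
    by (simp add: sum.distrib)
  also have "\<dots> \<le> card (nodes T) * (card ?X + 1)" using a by simp
  finally show ?thesis .
qed

theorem theorem29:
  "\<exists>C::nat. \<forall>(T::'a fault_tree) vs cs ws.
     fault_tree T \<and> valid_outer T vs \<and> valid_children T cs \<and> valid_inner T ws \<longrightarrow>
     sfpa2_cost T vs cs ws
       \<le> C * card (nodes T) * (card (multi_parent T) + 1) * 4 ^ card (multi_parent T)"
proof (intro exI[of _ 9] allI impI)
  fix T :: "'a fault_tree" and vs cs ws
  assume h: "fault_tree T \<and> valid_outer T vs \<and> valid_children T cs \<and> valid_inner T ws"
  then have ft: "fault_tree T" and vc: "valid_children T cs" by auto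
  let ?X = "multi_parent T" let ?n = "card (nodes T)" let ?k = "card ?X"
  have dv: "distinct vs" "set vs = nodes T" using h by (auto simp: valid_outer_def)
  have g0: "\<forall>u. fst ((\<lambda>_. sfp_const 0 :: 'a sfp) u) \<subseteq> ?X" by (simp add: fst_ops)
  note rb = run_bound[OF ft vc, of vs "\<lambda>_. sfp_const 0" ws 0, OF _ g0]
  have c1: "sfpa2_cost T vs cs ws \<le> (\<Sum>v\<leftarrow>vs. (length (cs v) + length (ws v) + 1) * (3 * 4 ^ ?k))"
    using rb dv by (simp add: sfpa2_cost_def sfpa2_run_def)
  also have "\<dots> = (\<Sum>v\<in>nodes T. (length (cs v) + length (ws v) + 1) * (3 * 4 ^ ?k))"
    using dv by (simp add: sum_list_distinct_conv_sum_set)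
  also have "\<dots> = (\<Sum>v\<in>nodes T. (card (ch T v) + card (ToDo_set T v) + 1) * (3 * 4 ^ ?k))"
  proof (rule sum.cong)
    fix v assume v: "v \<in> nodes T"
    have "length (cs v) = card (ch T v)" using vc v by (metis valid_children_def distinct_card)
    moreover have "length (ws v) = card (ToDo_set T v)" using h v by (metis valid_inner_def distinct_card)
    ultimately show "(length (cs v) + length (ws v) + 1) * (3 * 4 ^ ?k) =
       (card (ch T v) + card (ToDo_set T v) + 1) * (3 * 4 ^ ?k)" by simp
  qed simp
  also have "\<dots> = ((\<Sum>v\<in>nodes T. card (ch T v)) + (\<Sum>v\<in>nodes T. card (ToDo_set T v)) + ?n) * (3 * 4 ^ ?k)"
    by (simp add: sum_distrib_right sum_distrib_left sum.distrib algebra_simps)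
  also have "\<dots> \<le> (?n * (?k + 1) + ?n + ?n) * (3 * 4 ^ ?k)"
    using sum_ch[OF ft] sum_todo[OF ft] by (intro mult_le_mono1) linarith
  also have "\<dots> \<le> (3 * (?n * (?k + 1))) * (3 * 4 ^ ?k)"
    by (intro mult_le_mono1) (simp add: algebra_simps)
  also have "\<dots> = 9 * ?n * (?k + 1) * 4 ^ ?k" by simp
  finally show "sfpa2_cost T vs cs ws \<le> 9 * ?n * (?k + 1) * 4 ^ ?k" .
qed

end
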